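(* In the standing setting, assume that the self-adjoint operator $A^N$ in $\overline V$ associated with $\mathfrak a$ has no eigenvector belonging to $V_D=\ker j$. Let $\lambda,\mu\in\mathbb R$. Then $\lambda$ is an eigenvalue (equivalently, lies in the spectrum) of the self-adjoint operator $A_\mu$ in $\overline V$ associated with $\mathfrak a_\mu$ if and only if $\mu\in\sigma(\mathcal N_\lambda)$.
   Context: Standing setting: $V,H,K$ complex Hilbert spaces, $V$ embedded in $H$ with compact inclusion $i\colon V\to H$, $j\colon V\to K$ compact linear, $\mathfrak a$ a positive, symmetric, continuous sesquilinear form on $V$ which is $i$-elliptic ($\mathfrak a(u,u)+\omega\|u\|_H^2\ge\delta\|u\|_V^2$ for some $\omega,\delta>0$). $\mathfrak a_\mu(u,v)=\mathfrak a(u,v)-\mu(j(u),j(v))_K$; the operator $B$ in $\overline W$ associated with a form $\mathfrak c$ on a closed subspace $W\subset V$ is: $u\in D(B)$, $Bu=f$ iff $u\in W$, $f\in\overline W$, $\mathfrak c(u,v)=(f,v)_H$ for all $v\in W$ (these have compact resolvent). $\mathfrak b_\lambda(u,v)=\mathfrak a(u,v)-\lambda(u,v)_H$, and $\mathcal N_\lambda=\{(j(u),\psi)\in K\times K: u\in V,\ \mathfrak b_\lambda(u,v)=(\psi,j(v))_K\ \forall v\in V\}$, a self-adjoint graph in $K$ with compact resolvent; its single-valued part $\mathcal N_\lambda^\circ$ is the self-adjoint operator in $\overline{D(\mathcal N_\lambda)}$ with graph $\mathcal N_\lambda\cap(\overline{D(\mathcal N_\lambda)}\times\overline{D(\mathcal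 N_\lambda)})$, and $\sigma(\mathcal N_\lambda):=\sigma(\mathcal N_\lambda^\circ)$, which consists of eigenvalues. *)

theory Defs
  imports "HOL-Analysis.Analysis"
begin

class complex_vector = real_vector +
  fixes scaleC :: "complex \<Rightarrow> 'a \<Rightarrow> 'a" (infixr \<open>*\<^sub>C\<close> 75)
  assumes scaleC_add_right: "c *\<^sub>C (x + y) = c *\<^sub>C x + c *\<^sub>C y"
    and scaleC_add_left: "(b + c) *\<^sub>C x = b *\<^sub>C x + c *\<^sub>C x"
    and scaleC_scaleC: "b *\<^sub>C (c *\<^sub>C x) = (b * c) *\<^sub>C x"
    and scaleC_one: "1 *\<^sub>C x = x"
    and scaleR_scaleC: "scaleR r x = complex_of_real r *\<^sub>C x"

class complex_inner = complex_vector + real_normed_vector +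
  fixes cinner :: "'a \<Rightarrow> 'a \<Rightarrow> complex"
  assumes cinner_commute: "cinner x y = cnj (cinner y x)"
    and cinner_add_left: "cinner (x + y) z = cinner x z + cinner y z"
    and cinner_scaleC_left: "cinner (c *\<^sub>C x) y = c * cinner x y"
    and cinner_self_Re: "0 \<le> Re (cinner x x)"
    and cinner_eq_zero_iff: "cinner x x = 0 \<longleftrightarrow> x = 0"
    and norm_eq_sqrt_cinner: "norm x = sqrt (Re (cinner x x))"

class chilbert_space = complex_inner + complete_space


instantiation complex :: chilbert_space
begin
definition scaleC_complex :: "complex \<Rightarrow> complex \<Rightarrow> complex" where "scaleC_complex c x = c * x"
definition cinner_complex :: "complex \<Rightarrow> complex \<Rightarrow> complex" where "cinner_complex x y = x * cnj y"
instance
proof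
  fix x y z :: complex and b c :: complex and r :: real
  show "c *\<^sub>C (x + y) = c *\<^sub>C x + c *\<^sub>C y" by (simp add: scaleC_complex_def distrib_left)
  show "(b + c) *\<^sub>C x = b *\<^sub>C x + c *\<^sub>C x" by (simp add: scaleC_complex_def distrib_right)
  show "b *\<^sub>C (c *\<^sub>C x) = (b * c) *\<^sub>C x" by (simp add: scaleC_complex_def)
  show "1 *\<^sub>C x = x" by (simp add: scaleC_complex_def)
  show "scaleR r x = complex_of_real r *\<^sub>C x" by (simp add: scaleC_complex_def scaleR_conv_of_real)
  show "cinner x y = cnj (cinner y x)" by (simp add: cinner_complex_def mult.commute)
  show "cinner (x + y) z = cinner x z + cinner y z" by (simp add: cinner_complex_def distrib_right)
  show "cinner (c *\<^sub>C x) y = c * cinner x y" by (simp add: cinner_complex_def scaleC_complex_def)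
  show "0 \<le> Re (cinner x x)" by (simp add: cinner_complex_def)
  show "cinner x x = 0 \<longleftrightarrow> x = 0" by (simp add: cinner_complex_def)
  show "norm x = sqrt (Re (cinner x x))" by (simp add: cinner_complex_def cmod_def power2_eq_square)
qed
end

definition clinear_map :: "('a::complex_vector \<Rightarrow> 'b::complex_vector) \<Rightarrow> bool" where
  "clinear_map f \<longleftrightarrow> (\<forall>x y. f (x + y) = f x + f y) \<and> (\<forall>c x. f (c *\<^sub>C x) = c *\<^sub>C f x)"

definition compact_clinear :: "('a::{complex_vector,real_normed_vector} \<Rightarrow> 'b::{complex_vector,real_normed_vector}) \<Rightarrow> bool" where
  "compact_clinear f \<longleftrightarrow> clinear_map f \<and> (\<forall>S. bounded S \<longrightarrow> compact (closure (f ` S)))"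

definition sesquilinear :: "('a::complex_vector \<Rightarrow> 'a \<Rightarrow> complex) \<Rightarrow> bool" where
  "sesquilinear a \<longleftrightarrow>
     (\<forall>u w v. a (u + w) v = a u v + a w v) \<and> (\<forall>c u v. a (c *\<^sub>C u) v = c * a u v) \<and>
     (\<forall>u v w. a u (v + w) = a u v + a u w) \<and> (\<forall>c u v. a u (c *\<^sub>C v) = cnj c * a u v)"

definition form_symmetric :: "('a \<Rightarrow> 'a \<Rightarrow> complex) \<Rightarrow> bool" where
  "form_symmetric a \<longleftrightarrow> (\<forall>u v. a u v = cnj (a v u))"

definition form_positive :: "('a \<Rightarrow> 'a \<Rightarrow> complex) \<Rightarrow> bool" where
  "form_positive a \<longleftrightarrow> (\<forall>u. 0 \<le> Re (a u u))"

definition form_continuous :: "('a::real_normed_vector \<Rightarrow> 'a \<Rightarrow> complex) \<Rightarrow> bool" where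
  "form_continuous a \<longleftrightarrow> (\<exists>C. \<forall>u v. cmod (a u v) \<le> C * norm u * norm v)"

definition form_elliptic :: "('v::real_normed_vector \<Rightarrow> 'v \<Rightarrow> complex) \<Rightarrow> ('v \<Rightarrow> 'h::real_normed_vector) \<Rightarrow> bool" where
  "form_elliptic a i \<longleftrightarrow> (\<exists>\<omega> > 0. \<exists>\<delta> > 0. \<forall>u. Re (a u u) + \<omega> * (norm (i u))\<^sup>2 \<ge> \<delta> * (norm u)\<^sup>2)"

text \<open>The operator in \<open>closure (range i)\<close> (i.e. \<open>\<overline>V\<close> in \<open>H\<close>) associated with a form \<open>c\<close> on \<open>V\<close>
  (here \<open>W = V\<close>), given by its graph in \<open>H \<times> H\<close>:
  \<open>i u \<in> D(B)\<close>, \<open>B (i u) = f\<close> iff \<open>f \<in> \<overline>V\<close> and \<open>c(u,v) = (f, i v)\<^sub>H\<close> for all \<open>v \<in> V\<close>.\<close>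
definition assoc_op :: "('v \<Rightarrow> 'h::complex_inner) \<Rightarrow> ('v \<Rightarrow> 'v \<Rightarrow> complex) \<Rightarrow> ('h \<times> 'h) set" where
  "assoc_op i c = {(i u, f) | u f. f \<in> closure (range i) \<and> (\<forall>v. c u v = cinner f (i v))}"

definition eigenvector_of :: "('h \<times> 'h::complex_vector) set \<Rightarrow> 'h \<Rightarrow> bool" where
  "eigenvector_of G x \<longleftrightarrow> x \<noteq> 0 \<and> (\<exists>c. (x, c *\<^sub>C x) \<in> G)"

definition eigenvalue_of :: "('h \<times> 'h::complex_vector) set \<Rightarrow> complex \<Rightarrow> bool" where
  "eigenvalue_of G c \<longleftrightarrow> (\<exists>x. x \<noteq> 0 \<and> (x, c *\<^sub>C x) \<in> G)"

text \<open>Resolvent set and spectrum of an operator (given by its graph \<open>G\<close>) in the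
  Hilbert space \<open>X\<close>: \<open>\<mu> \<in> \<rho>\<close> iff \<open>G - \<mu>\<close> maps \<open>D(G)\<close> onto \<open>X\<close> with bounded inverse.\<close>
definition resolvent_set_op :: "'h::{complex_vector,real_normed_vector} set \<Rightarrow> ('h \<times> 'h) set \<Rightarrow> complex set" where
  "resolvent_set_op X G = {\<mu>. (\<forall>y\<in>X. \<exists>x z. (x, z) \<in> G \<and> z - \<mu> *\<^sub>C x = y) \<and>
       (\<exists>C. \<forall>(x, z)\<in>G. norm x \<le> C * norm (z - \<mu> *\<^sub>C x))}"

definition spectrum_op :: "'h::{complex_vector,real_normed_vector} set \<Rightarrow> ('h \<times> 'h) set \<Rightarrow> complex set" where
  "spectrum_op X G = UNIV - resolvent_set_op X G"

definition DtN_graph :: "('v \<Rightarrow> 'h::complex_inner) \<Rightarrow> ('v \<Rightarrow> 'k::complex_inner) \<Rightarrow>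
    ('v \<Rightarrow> 'v \<Rightarrow> complex) \<Rightarrow> real \<Rightarrow> ('k \<times> 'k) set" where
  "DtN_graph i j a lam = {(j u, \<psi>) | u \<psi>.
      \<forall>v. a u v - complex_of_real lam * cinner (i u) (i v) = cinner \<psi> (j v)}"

definition single_valued_part :: "('k::topological_space \<times> 'k) set \<Rightarrow> ('k \<times> 'k) set" where
  "single_valued_part N = N \<inter> (closure (Domain N) \<times> closure (Domain N))"

definition graph_spectrum :: "('k::{complex_vector,real_normed_vector} \<times> 'k) set \<Rightarrow> complex set" where
  "graph_spectrum N = spectrum_op (closure (Domain N)) (single_valued_part N)"

end

theory Submission imports Defs begin

section \<open>Basic facts on complex inner products\<close>

lemma cinner_zero_left[simp]: "cinner 0 (y::'a::complex_inner) = 0"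
  using cinner_add_left[of "0::'a" 0 y] by simp

lemma cinner_add_right: "cinner (x::'a::complex_inner) (y + z) = cinner x y + cinner x z"
proof -
  have "cinner x (y + z) = cnj (cinner (y + z) x)" by (rule cinner_commute)
  also have "\<dots> = cnj (cinner y x + cinner z x)" by (simp only: cinner_add_left)
  also have "\<dots> = cnj (cinner y x) + cnj (cinner z x)" by (rule complex_cnj_add)
  also have "\<dots> = cinner x y + cinner x z"
    by (simp only: cinner_commute[of x y, symmetric] cinner_commute[of x z, symmetric])
  finally show ?thesis .
qed

lemma cinner_zero_right[simp]: "cinner (x::'a::complex_inner) 0 = 0"
proof -
  have "cinner x 0 = cinner x (0 + 0)" by simp
  also have "\<dots> = cinner x 0 + cinner x 0" by (rule cinner_add_right)
  finally show ?thesis by simp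
qed

lemma cinner_scaleC_right: "cinner (x::'a::complex_inner) (c *\<^sub>C y) = cnj c * cinner x y"
proof -
  have "cinner x (c *\<^sub>C y) = cnj (cinner (c *\<^sub>C y) x)" by (rule cinner_commute)
  also have "\<dots> = cnj (c * cinner y x)" by (simp only: cinner_scaleC_left)
  also have "\<dots> = cnj c * cnj (cinner y x)" by (rule complex_cnj_mult)
  also have "\<dots> = cnj c * cinner x y"
    by (simp only: cinner_commute[of x y, symmetric])
  finally show ?thesis .
qed

lemma cinner_scaleR_left: "cinner (r *\<^sub>R x) (y::'a::complex_inner) = complex_of_real r * cinner x y"
  by (simp add: scaleR_scaleC cinner_scaleC_left)

lemma cinner_scaleR_right: "cinner (x::'a::complex_inner) (r *\<^sub>R y) = complex_of_real r * cinner x y"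
  by (simp add: scaleR_scaleC cinner_scaleC_right)

lemma cinner_minus_left: "cinner (- x) (y::'a::complex_inner) = - cinner x y"
  using cinner_scaleR_left[of "-1" x y] by simp

lemma cinner_minus_right: "cinner (x::'a::complex_inner) (- y) = - cinner x y"
  using cinner_scaleR_right[of x "-1" y] by simp

lemma cinner_diff_left: "cinner (x - y) (z::'a::complex_inner) = cinner x z - cinner y z"
  using cinner_add_left[of x "- y" z] by (simp add: cinner_minus_left)

lemma cinner_diff_right: "cinner (x::'a::complex_inner) (y - z) = cinner x y - cinner x z"
  using cinner_add_right[of x y "- z"] by (simp add: cinner_minus_right)

lemma cinner_self_real: "cinner (x::'a::complex_inner) x = complex_of_real (Re (cinner x x))"
proof -
  have "cnj (cinner x x) = cinner x x" by (rule cinner_commute[symmetric])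
  then have "cinner x x \<in> \<real>" unfolding Reals_cnj_iff .
  then show ?thesis by (rule of_real_Re[symmetric])
qed

lemma norm_sq_cinner: "(norm (x::'a::complex_inner))\<^sup>2 = Re (cinner x x)"
  by (subst norm_eq_sqrt_cinner) (rule real_sqrt_pow2[OF cinner_self_Re])

lemma cinner_self_norm: "cinner (x::'a::complex_inner) x = complex_of_real ((norm x)\<^sup>2)"
proof -
  have "cinner x x = complex_of_real (Re (cinner x x))" by (rule cinner_self_real)
  also have "\<dots> = complex_of_real ((norm x)\<^sup>2)" by (simp only: norm_sq_cinner)
  finally show ?thesis .
qed

lemma cauchy_schwarz_c: "cmod (cinner (x::'a::complex_inner) y) \<le> norm x * norm y"
proof (cases "y = 0")
  case True then show ?thesis by simp
next
  case False
  define a where "a = cinner x y"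
  define Y where "Y = (norm y)\<^sup>2"
  have Ypos: "Y > 0" using False by (simp add: Y_def)
  define w where "w = complex_of_real Y *\<^sub>C x - a *\<^sub>C y"
  have yx: "cinner y x = cnj a" unfolding a_def by (rule cinner_commute)
  have xx: "cinner x x = complex_of_real ((norm x)\<^sup>2)" by (rule cinner_self_norm)
  have yy: "cinner y y = complex_of_real Y" unfolding Y_def by (rule cinner_self_norm)
  have aa: "a * cnj a = complex_of_real ((cmod a)\<^sup>2)" by (rule complex_norm_square[symmetric])
  have "cinner w w = cnj (complex_of_real Y) * (complex_of_real Y * cinner x x) -
     cnj (complex_of_real Y) * (a * cinner y x) -
     (cnj a * (complex_of_real Y * cinner x y) - cnj a * (a * cinner y y))"
    unfolding w_def cinner_diff_left cinner_diff_right cinner_scaleC_left cinner_scaleC_right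
    by (simp only: right_diff_distrib left_diff_distrib mult.assoc)
  also have "\<dots> = complex_of_real Y * (complex_of_real Y * complex_of_real ((norm x)\<^sup>2)) -
     complex_of_real Y * (a * cnj a) -
     (complex_of_real Y * (a * cnj a) - (a * cnj a) * complex_of_real Y)"
    unfolding xx yy yx a_def[symmetric] complex_cnj_complex_of_real by algebra
  also have "\<dots> = complex_of_real (Y * Y * (norm x)\<^sup>2 - Y * (cmod a)\<^sup>2)"
    unfolding aa by simp
  finally have "Re (cinner w w) = Y * Y * (norm x)\<^sup>2 - Y * (cmod a)\<^sup>2" by simp
  then have "Y * (cmod a)\<^sup>2 \<le> Y * (Y * (norm x)\<^sup>2)" using cinner_self_Re[of w] by (simp add: algebra_simps)
  then have "(cmod a)\<^sup>2 \<le> Y * (norm x)\<^sup>2" using Ypos by simp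
  also have "\<dots> = (norm x * norm y)\<^sup>2" by (simp add: Y_def power_mult_distrib)
  finally have "(cmod a)\<^sup>2 \<le> (norm x * norm y)\<^sup>2" .
  then show ?thesis unfolding a_def by (rule power2_le_imp_le) simp
qed

lemma real_quad_zero:
  fixes A r :: real
  assumes "A \<ge> 0" and "\<And>t. 2 * t * r \<le> t\<^sup>2 * A"
  shows "r = 0"
proof -
  define t where "t = r/(A+1)"
  have A1: "A + 1 > 0" using assms(1) by simp
  have "2 * t * r \<le> t\<^sup>2 * A" by (rule assms(2))
  then have "(A+1)\<^sup>2 * (2 * t * r) \<le> (A+1)\<^sup>2 * (t\<^sup>2 * A)"
    using A1 by (simp add: mult_left_mono)
  moreover have "(A+1)\<^sup>2 * (2 * t * r) = 2 * r\<^sup>2 * (A+1)"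
    unfolding t_def using A1 by (simp add: field_simps power2_eq_square)
  moreover have "(A+1)\<^sup>2 * (t\<^sup>2 * A) = r\<^sup>2 * A"
  proof -
    have "(A+1)\<^sup>2 * t\<^sup>2 = r\<^sup>2" unfolding t_def using A1 by (simp add: power_divide)
    then show ?thesis by (metis mult.assoc)
  qed
  ultimately have "2 * r\<^sup>2 * (A+1) \<le> r\<^sup>2 * A" by simp
  then have "r\<^sup>2 * (A + 2) \<le> 0" by (simp add: algebra_simps)
  then have "r\<^sup>2 \<le> 0" using assms(1) by (simp add: mult_le_0_iff)
  then show ?thesis by simp
qed

section \<open>Linear maps\<close>

lemma clinear_add: "clinear_map f \<Longrightarrow> f (x + y) = f x + f y"
  unfolding clinear_map_def by blast

lemma clinear_scaleC: "clinear_map f \<Longrightarrow> f (c *\<^sub>C x) = c *\<^sub>C f x"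
  unfolding clinear_map_def by blast

lemma clinear_scaleR: "clinear_map f \<Longrightarrow> f (r *\<^sub>R x) = r *\<^sub>R f x"
  by (simp add: scaleR_scaleC clinear_scaleC)

lemma clinear_zero: "clinear_map f \<Longrightarrow> f 0 = 0"
  using clinear_scaleR[of f 0 0] by simp

lemma clinear_minus: "clinear_map f \<Longrightarrow> f (- x) = - f x"
  using clinear_scaleR[of f "-1" x] by simp

lemma clinear_diff: "clinear_map f \<Longrightarrow> f (x - y) = f x - f y"
  using clinear_add[of f x "- y"] clinear_minus[of f y] by simp

lemma compact_clinear_bounded:
  assumes "compact_clinear f"
  shows "\<exists>K>0. \<forall>x. norm (f x) \<le> K * norm x"
proof -
  have lin: "clinear_map f" using assms unfolding compact_clinear_def by blast
  have "compact (closure (f ` cball 0 1))" using assms unfolding compact_clinear_def by auto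
  then have "bounded (closure (f ` cball 0 1))" by (rule compact_imp_bounded)
  then have "bounded (f ` cball 0 1)" by (rule bounded_subset[OF _ closure_subset])
  then obtain B where B: "\<And>y. y \<in> f ` cball 0 1 \<Longrightarrow> norm y \<le> B" unfolding bounded_iff by blast
  define K where "K = max B 1"
  have "norm (f x) \<le> K * norm x" for x
  proof (cases "x = 0")
    case True then show ?thesis using clinear_zero[OF lin] by simp
  next
    case False
    define u where "u = (1 / norm x) *\<^sub>R x"
    have "u \<in> cball 0 1" using False by (simp add: u_def)
    then have "norm (f u) \<le> B" using B by blast
    have "x = norm x *\<^sub>R u" using False by (simp add: u_def)
    then have "f x = f (norm x *\<^sub>R u)" by simp
    also have "\<dots> = norm x *\<^sub>R f u" by (rule clinear_scaleR[OF lin])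
    finally have "f x = norm x *\<^sub>R f u" .
    then have "norm (f x) = norm x * norm (f u)" by simp
    also have "\<dots> \<le> norm x * K" using \<open>norm (f u) \<le> B\<close> by (simp add: K_def mult_left_mono)
    finally show ?thesis by (simp add: mult.commute)
  qed
  moreover have "K > 0" by (simp add: K_def)
  ultimately show ?thesis by blast
qed

lemma compact_clinear_subseq:
  fixes u :: "nat \<Rightarrow> 'a::{complex_vector,real_normed_vector}"
  assumes "compact_clinear f" and "\<And>n. norm (u n) \<le> B"
  shows "\<exists>r l. strict_mono r \<and> (\<lambda>n. f (u (r n))) \<longlonglongrightarrow> l"
proof -
  define C where "C = closure (f ` range u)"
  have "bounded (range u)" using assms(2) unfolding bounded_iff by blast
  then have "compact C" using assms(1) unfolding compact_clinear_def C_def by blast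
  then have sc: "seq_compact C" by (rule compact_imp_seq_compact)
  have mem: "\<forall>n. (f \<circ> u) n \<in> C"
  proof
    fix n
    have "(f \<circ> u) n \<in> f ` range u" unfolding o_def by (rule imageI[OF rangeI])
    then show "(f \<circ> u) n \<in> C" unfolding C_def by (rule closure_subset[THEN subsetD])
  qed
  have "\<exists>l\<in>C. \<exists>r. strict_mono r \<and> ((f \<circ> u) \<circ> r) \<longlonglongrightarrow> l"
    by (rule sc[unfolded seq_compact_def, rule_format, OF mem[rule_format]])
  then obtain l r where "strict_mono r" "((f \<circ> u) \<circ> r) \<longlonglongrightarrow> l" by blast
  then show ?thesis by (auto simp: o_def)
qed

section \<open>Coercive hermitian forms: projection and Riesz\<close>

locale cform =
  fixes e :: "'a::chilbert_space \<Rightarrow> 'a \<Rightarrow> complex" and Ce \<delta> :: real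
  assumes sesq: "sesquilinear e" and herm: "form_symmetric e"
    and bnd: "\<And>u v. cmod (e u v) \<le> Ce * norm u * norm v"
    and coer: "\<And>u. \<delta> * (norm u)\<^sup>2 \<le> Re (e u u)" and dpos: "\<delta> > 0"
begin

lemma add_left: "e (u + w) v = e u v + e w v"
  using sesq by (simp add: sesquilinear_def)
lemma scale_left: "e (c *\<^sub>C u) v = c * e u v"
  using sesq by (simp add: sesquilinear_def)
lemma add_right: "e u (v + w) = e u v + e u w"
  using sesq by (simp add: sesquilinear_def)
lemma scale_right: "e u (c *\<^sub>C v) = cnj c * e u v"
  using sesq by (simp add: sesquilinear_def)
lemma swap: "e v u = cnj (e u v)"
  by (rule herm[unfolded form_symmetric_def, rule_format])
lemma zero_left[simp]: "e 0 v = 0"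
  using add_left[of 0 0 v] by simp
lemma zero_right[simp]: "e u 0 = 0"
  using add_right[of u 0 0] by simp
lemma scaleR_left: "e (r *\<^sub>R u) v = complex_of_real r * e u v"
  by (simp add: scaleR_scaleC scale_left)
lemma scaleR_right: "e u (r *\<^sub>R v) = complex_of_real r * e u v"
  by (simp add: scaleR_scaleC scale_right)
lemma minus_left: "e (- u) v = - e u v"
  using scaleR_left[of "-1" u v] by simp
lemma minus_right: "e u (- v) = - e u v"
  using scaleR_right[of u "-1" v] by simp
lemma diff_left: "e (u - w) v = e u v - e w v"
  using add_left[of u "- w" v] by (simp add: minus_left)
lemma diff_right: "e u (v - w) = e u v - e u w"
  using add_right[of u v "- w"] by (simp add: minus_right)

lemma Re_swap: "Re (e v u) = Re (e u v)"
  by (subst swap) simp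

lemma q_nonneg: "0 \<le> Re (e u u)"
proof -
  have "0 \<le> \<delta> * (norm u)\<^sup>2" using dpos by simp
  also have "\<dots> \<le> Re (e u u)" by (rule coer)
  finally show ?thesis .
qed

lemma q_expand: "Re (e (x + y) (x + y)) = Re (e x x) + 2 * Re (e x y) + Re (e y y)"
proof -
  have "e (x + y) (x + y) = e x x + e x y + (e y x + e y y)"
    by (simp add: add_left add_right)
  then have "Re (e (x + y) (x + y)) = Re (e x x) + Re (e x y) + (Re (e y x) + Re (e y y))"
    by simp
  then show ?thesis using Re_swap[of y x] by simp
qed

lemma q_scaleR: "Re (e (t *\<^sub>R x) (t *\<^sub>R x)) = t\<^sup>2 * Re (e x x)"
  by (simp add: scaleR_left scaleR_right power2_eq_square)

lemma q_minus: "Re (e (- x) (- x)) = Re (e x x)"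
  by (simp add: minus_left minus_right)

lemma parallelogram:
  "Re (e (x + y) (x + y)) + Re (e (x - y) (x - y)) = 2 * Re (e x x) + 2 * Re (e y y)"
proof -
  have "Re (e (x - y) (x - y)) = Re (e x x) + 2 * Re (e x (- y)) + Re (e (- y) (- y))"
    using q_expand[of x "- y"] by simp
  then have "Re (e (x - y) (x - y)) = Re (e x x) - 2 * Re (e x y) + Re (e y y)"
    by (simp add: minus_right minus_left q_minus)
  then show ?thesis using q_expand[of x y] by simp
qed

end

context cform begin

lemma q_add_ge: "Re (e (x + y) (x + y)) \<ge> Re (e x x) - 2 * Ce * norm x * norm y"
proof -
  have "- Re (e x y) \<le> cmod (e x y)" using abs_Re_le_cmod[of "e x y"] by linarith
  also have "\<dots> \<le> Ce * norm x * norm y" by (rule bnd)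
  finally have "Re (e x y) \<ge> - (Ce * norm x * norm y)" by linarith
  then show ?thesis using q_expand[of x y] q_nonneg[of y] by linarith
qed

lemma projection:
  assumes M_closed: "closed M" and M0: "0 \<in> M" and Madd: "\<And>x y. x \<in> M \<Longrightarrow> y \<in> M \<Longrightarrow> x + y \<in> M"
    and Mscale: "\<And>c x. x \<in> M \<Longrightarrow> c *\<^sub>C x \<in> M"
  shows "\<exists>p\<in>M. \<forall>m\<in>M. e (g - p) m = 0"
proof -
  define Q where "Q = (\<lambda>m. Re (e (g - m) (g - m)))"
  define D where "D = Q ` M"
  define d where "d = Inf D"
  have "Q 0 \<in> D" unfolding D_def using M0 by (rule imageI)
  then have Dne: "D \<noteq> {}" by auto
  have Dbdd: "bdd_below D"
  proof (rule bdd_belowI[of _ 0])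
    fix x assume "x \<in> D"
    then obtain m where "x = Q m" unfolding D_def by auto
    then show "0 \<le> x" unfolding Q_def using q_nonneg by simp
  qed
  have dle: "d \<le> Q m" if "m \<in> M" for m
  proof -
    have "Q m \<in> D" unfolding D_def using that by (rule imageI)
    then show ?thesis unfolding d_def using Dbdd by (rule cInf_lower)
  qed
  have ex: "\<forall>n. \<exists>m. m \<in> M \<and> Q m < d + inverse (real (Suc n))"
  proof
    fix n
    have "Inf D < d + inverse (real (Suc n))" unfolding d_def by simp
    then obtain x where "x \<in> D" "x < d + inverse (real (Suc n))" using cInf_lessD[OF Dne] by blast
    then show "\<exists>m. m \<in> M \<and> Q m < d + inverse (real (Suc n))" unfolding D_def by auto
  qed
  obtain m where mM: "\<And>n. m n \<in> M" and mlt: "\<And>n. Q (m n) < d + inverse (real (Suc n))"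
    using choice[OF ex] by blast
  have est: "Re (e (m n - m k) (m n - m k)) \<le> 2 * inverse (real (Suc n)) + 2 * inverse (real (Suc k))" for n k
  proof -
    define a where "a = g - m n"
    define b where "b = g - m k"
    define mid where "mid = (1/2::real) *\<^sub>R (m n + m k)"
    have midM: "mid \<in> M" unfolding mid_def scaleR_scaleC by (intro Mscale Madd mM)
    have ab: "b + a = (2::real) *\<^sub>R (g - mid)" unfolding a_def b_def mid_def
      by (simp add: algebra_simps scaleR_2)
    have ba: "b - a = m n - m k" unfolding a_def b_def by simp
    have "Re (e (b + a) (b + a)) = 4 * Q mid" unfolding ab q_scaleR Q_def by simp
    also have "\<dots> \<ge> 4 * d" using dle[OF midM] by simp
    finally have "Re (e (b + a) (b + a)) \<ge> 4 * d" .
    moreover have "Re (e (b + a) (b + a)) + Re (e (b - a) (b - a)) = 2 * Q (m k) + 2 * Q (m n)"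
      unfolding Q_def a_def[symmetric] b_def[symmetric] by (rule parallelogram)
    moreover note mlt[of n] mlt[of k]
    ultimately show ?thesis unfolding ba by linarith
  qed
  have "Cauchy m"
    unfolding Cauchy_def
  proof (intro allI impI)
    fix \<epsilon> :: real assume "\<epsilon> > 0"
    then have "\<delta> * \<epsilon>\<^sup>2 / 4 > 0" using dpos by simp
    then obtain N where N: "inverse (real (Suc N)) < \<delta> * \<epsilon>\<^sup>2 / 4"
      using reals_Archimedean by blast
    have "dist (m a) (m b) < \<epsilon>" if "a \<ge> N" "b \<ge> N" for a b
    proof -
      have ia: "inverse (real (Suc a)) \<le> inverse (real (Suc N))" using that by (simp add: field_simps)
      have ib: "inverse (real (Suc b)) \<le> inverse (real (Suc N))" using that by (simp add: field_simps)
      have "\<delta> * (norm (m a - m b))\<^sup>2 \<le> Re (e (m a - m b) (m a - m b))" by (rule coer)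
      also have "\<dots> \<le> 2 * inverse (real (Suc a)) + 2 * inverse (real (Suc b))" by (rule est)
      also have "\<dots> < \<delta> * \<epsilon>\<^sup>2" using ia ib N by linarith
      finally have "(norm (m a - m b))\<^sup>2 < \<epsilon>\<^sup>2" using dpos by simp
      then have "norm (m a - m b) < \<epsilon>" using \<open>\<epsilon> > 0\<close> by (simp add: power_less_imp_less_base)
      then show ?thesis by (simp add: dist_norm)
    qed
    then show "\<exists>M. \<forall>a\<ge>M. \<forall>b\<ge>M. dist (m a) (m b) < \<epsilon>" by blast
  qed
  then obtain p where mp: "m \<longlonglongrightarrow> p" using Cauchy_convergent convergent_def by blast
  have pM: "p \<in> M" using M_closed mM mp closed_sequential_limits by blast
  define w where "w = g - p"
  have bound: "Re (e w w) \<le> d + inverse (real (Suc n)) + 2 * Ce * norm w * norm (p - m n)" for n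
  proof -
    have eq: "g - m n = w + (p - m n)" unfolding w_def by simp
    have "Q (m n) \<ge> Re (e w w) - 2 * Ce * norm w * norm (p - m n)"
      unfolding Q_def eq by (rule q_add_ge)
    then show ?thesis using mlt[of n] by linarith
  qed
  have lim: "(\<lambda>n. d + inverse (real (Suc n)) + 2 * Ce * norm w * norm (p - m n)) \<longlonglongrightarrow> d + 0 + 2 * Ce * norm w * 0"
  proof (intro tendsto_intros LIMSEQ_inverse_real_of_nat)
    have "(\<lambda>n. p - m n) \<longlonglongrightarrow> p - p" by (intro tendsto_intros mp)
    then have "(\<lambda>n. norm (p - m n)) \<longlonglongrightarrow> norm (p - p)" by (rule tendsto_norm)
    then show "(\<lambda>n. norm (p - m n)) \<longlonglongrightarrow> 0" by simp
  qed
  have qw: "Re (e w w) \<le> d"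
    using LIMSEQ_le_const[OF lim] bound by simp
  have re0: "Re (e w m') = 0" if "m' \<in> M" for m'
  proof (rule real_quad_zero)
    show "0 \<le> Re (e m' m')" by (rule q_nonneg)
    fix t :: real
    have "p + t *\<^sub>R m' \<in> M" unfolding scaleR_scaleC by (intro Madd Mscale pM that)
    then have dQ: "d \<le> Q (p + t *\<^sub>R m')" by (rule dle)
    have eq: "g - (p + t *\<^sub>R m') = w + (- t) *\<^sub>R m'" unfolding w_def by simp
    have "Q (p + t *\<^sub>R m') = Re (e w w) + 2 * Re (e w ((- t) *\<^sub>R m')) + Re (e ((- t) *\<^sub>R m') ((- t) *\<^sub>R m'))"
      unfolding Q_def eq by (rule q_expand)
    also have "\<dots> = Re (e w w) - 2 * t * Re (e w m') + t\<^sup>2 * Re (e m' m')"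
      by (simp add: scaleR_left scaleR_right minus_left minus_right power2_eq_square)
    finally show "2 * t * Re (e w m') \<le> t\<^sup>2 * Re (e m' m')" using dQ qw by linarith
  qed
  have "e w m' = 0" if "m' \<in> M" for m'
  proof (rule complex_eqI)
    show "Re (e w m') = Re 0" using re0[OF that] by simp
    have "\<i> *\<^sub>C m' \<in> M" using that by (rule Mscale)
    then have "Re (e w (\<i> *\<^sub>C m')) = 0" by (rule re0)
    then show "Im (e w m') = Im 0" by (simp add: scale_right)
  qed
  then show ?thesis using pM unfolding w_def by blast
qed

end

context cform begin

lemma riesz:
  assumes ladd: "\<And>v w. l (v + w) = l v + l w" and lscale: "\<And>c v. l (c *\<^sub>C v) = cnj c * l v"
    and lbnd: "\<And>v. cmod (l v) \<le> L * norm v"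
  shows "\<exists>h. \<forall>v. l v = e h v"
proof (cases "\<forall>v. l v = 0")
  case True
  then show ?thesis by (intro exI[of _ 0]) simp
next
  case False
  then obtain z where lz: "l z \<noteq> 0" by blast
  have l0: "l 0 = 0" using ladd[of 0 0] by simp
  have lminus: "l (- v) = - l v" for v
  proof -
    have "- v = complex_of_real (-1) *\<^sub>C v" using scaleR_scaleC[of "-1" v] by simp
    then have "l (- v) = l (complex_of_real (-1) *\<^sub>C v)" by simp
    also have "\<dots> = - l v" by (simp add: lscale)
    finally show ?thesis .
  qed
  have ldiff: "l (v - w) = l v - l w" for v w
    using ladd[of v "- w"] lminus[of w] by simp
  define M where "M = {v. l v = 0}"
  have Mclosed: "closed M"
    unfolding closed_sequential_limits
  proof (intro allI impI)
    fix x y assume as: "(\<forall>n. x n \<in> M) \<and> x \<longlonglongrightarrow> y"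
    have le: "cmod (l y) \<le> L * norm (y - x n)" for n
    proof -
      have "l (x n) = 0" using as unfolding M_def by blast
      then have "l y = l (y - x n)" by (simp add: ldiff)
      then show ?thesis using lbnd[of "y - x n"] by simp
    qed
    have "(\<lambda>n. y - x n) \<longlonglongrightarrow> y - y" using as by (intro tendsto_intros) auto
    then have "(\<lambda>n. norm (y - x n)) \<longlonglongrightarrow> norm (y - y)" by (rule tendsto_norm)
    then have "(\<lambda>n. L * norm (y - x n)) \<longlonglongrightarrow> L * 0" by (intro tendsto_intros) simp
    then have "cmod (l y) \<le> L * 0" using le by (intro LIMSEQ_le_const[of _ "L * 0"]) auto
    then show "y \<in> M" unfolding M_def by simp
  qed
  have "\<exists>p\<in>M. \<forall>m\<in>M. e (z - p) m = 0"
  proof (rule projection[OF Mclosed])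
    show "0 \<in> M" unfolding M_def using l0 by simp
    show "x + y \<in> M" if "x \<in> M" "y \<in> M" for x y using that unfolding M_def by (simp add: ladd)
    show "c *\<^sub>C x \<in> M" if "x \<in> M" for c x using that unfolding M_def by (simp add: lscale)
  qed
  then obtain p where pM: "p \<in> M" and orth: "\<And>m. m \<in> M \<Longrightarrow> e (z - p) m = 0" by blast
  define z0 where "z0 = z - p"
  have lz0: "l z0 = l z" unfolding z0_def using pM by (simp add: ldiff M_def)
  then have "z0 \<noteq> 0" using lz l0 by auto
  then have "\<delta> * (norm z0)\<^sup>2 > 0" using dpos by simp
  then have "Re (e z0 z0) > 0" using coer[of z0] by linarith
  then have E: "e z0 z0 \<noteq> 0" by auto
  define h where "h = (l z0 / e z0 z0) *\<^sub>C z0"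
  have "l v = e h v" for v
  proof -
    define w where "w = cnj (l v) *\<^sub>C z0 - cnj (l z0) *\<^sub>C v"
    have "l w = l v * l z0 - l z0 * l v" unfolding w_def by (simp add: ldiff lscale)
    then have "w \<in> M" unfolding M_def by simp
    then have "e z0 w = 0" unfolding z0_def by (rule orth)
    then have eq: "l v * e z0 z0 = l z0 * e z0 v" unfolding w_def by (simp add: diff_right scale_right)
    have "e h v = l z0 / e z0 z0 * e z0 v" unfolding h_def by (simp add: scale_left)
    also have "\<dots> = (l z0 * e z0 v) / e z0 z0" by simp
    also have "\<dots> = l v" unfolding eq[symmetric] using E by simp
    finally show ?thesis by simp
  qed
  then show ?thesis by blast
qed

end

section \<open>Generic facts about sesquilinear forms\<close>

lemma sesq_add_left: "sesquilinear f \<Longrightarrow> f (u + w) v = f u v + f w v"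
  by (simp add: sesquilinear_def)
lemma sesq_scale_left: "sesquilinear f \<Longrightarrow> f (c *\<^sub>C u) v = c * f u v"
  by (simp add: sesquilinear_def)
lemma sesq_add_right: "sesquilinear f \<Longrightarrow> f u (v + w) = f u v + f u w"
  by (simp add: sesquilinear_def)
lemma sesq_scale_right: "sesquilinear f \<Longrightarrow> f u (c *\<^sub>C v) = cnj c * f u v"
  by (simp add: sesquilinear_def)
lemma sesq_scaleR_left: "sesquilinear f \<Longrightarrow> f (r *\<^sub>R u) v = complex_of_real r * f u v"
  by (simp add: scaleR_scaleC sesq_scale_left)
lemma sesq_zero_left: "sesquilinear f \<Longrightarrow> f 0 v = 0"
  using sesq_scaleR_left[of f 0 0 v] by simp
lemma sesq_minus_left: "sesquilinear f \<Longrightarrow> f (- u) v = - f u v"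
  using sesq_scaleR_left[of f "-1" u v] by simp
lemma sesq_diff_left: "sesquilinear f \<Longrightarrow> f (u - w) v = f u v - f w v"
  using sesq_add_left[of f u "- w" v] sesq_minus_left[of f w v] by simp
lemma sym_swap: "form_symmetric f \<Longrightarrow> f u v = cnj (f v u)"
  by (rule form_symmetric_def[THEN iffD1, rule_format])

lemma sesq_comb:
  assumes "sesquilinear a" "clinear_map f"
  shows "sesquilinear (\<lambda>u v. a u v - k * cinner (f u) (f v))"
  using assms unfolding sesquilinear_def
  by (simp add: clinear_add clinear_scaleC cinner_add_left cinner_add_right
      cinner_scaleC_left cinner_scaleC_right algebra_simps)

lemma sym_comb:
  assumes "form_symmetric a"
  shows "form_symmetric (\<lambda>u v. a u v - complex_of_real r * cinner (f u) (f v))"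
  unfolding form_symmetric_def
proof (intro allI)
  fix u v
  have "a u v = cnj (a v u)" using assms by (rule sym_swap)
  moreover have "cinner (f u) (f v) = cnj (cinner (f v) (f u))" by (rule cinner_commute)
  ultimately show "a u v - complex_of_real r * cinner (f u) (f v) =
      cnj (a v u - complex_of_real r * cinner (f v) (f u))" by simp
qed

lemma bnd_comb:
  assumes "\<And>u v. cmod (a u v) \<le> C * norm u * norm v" "\<And>x. norm (f x) \<le> K * norm x"
  shows "cmod (a u v - k * cinner (f u) (f v)) \<le> (C + cmod k * K\<^sup>2) * norm u * norm v"
proof -
  have "cmod (cinner (f u) (f v)) \<le> norm (f u) * norm (f v)" by (rule cauchy_schwarz_c)
  also have "\<dots> \<le> (K * norm u) * (K * norm v)"
    using assms(2)[of u] assms(2)[of v] by (intro mult_mono) (auto intro: order_trans[OF norm_ge_zero])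
  finally have ci: "cmod (cinner (f u) (f v)) \<le> K\<^sup>2 * norm u * norm v" by (simp add: power2_eq_square algebra_simps)
  have "cmod (a u v - k * cinner (f u) (f v)) \<le> cmod (a u v) + cmod k * cmod (cinner (f u) (f v))"
    using norm_triangle_ineq4[of "a u v" "k * cinner (f u) (f v)"] by (simp add: norm_mult)
  also have "\<dots> \<le> C * norm u * norm v + cmod k * (K\<^sup>2 * norm u * norm v)"
    using assms(1)[of u v] ci by (intro add_mono mult_left_mono) auto
  finally show ?thesis by (simp add: algebra_simps)
qed

locale sett =
  fixes i :: "'v::chilbert_space \<Rightarrow> 'h::chilbert_space" and j :: "'v \<Rightarrow> 'k::chilbert_space"
    and a :: "'v \<Rightarrow> 'v \<Rightarrow> complex" and lam mu :: real
  assumes i_inj: "inj i" and i_compact: "compact_clinear i" and j_compact: "compact_clinear j"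
    and a_sesq: "sesquilinear a" and a_sym: "form_symmetric a" and a_cont: "form_continuous a"
    and a_ell: "form_elliptic a i"
begin

definition "c1 = (\<lambda>u v. a u v - complex_of_real lam * cinner (i u) (i v))"
definition "c = (\<lambda>u v. c1 u v - complex_of_real mu * cinner (j u) (j v))"

lemma i_lin: "clinear_map i" using i_compact unfolding compact_clinear_def by blast
lemma j_lin: "clinear_map j" using j_compact unfolding compact_clinear_def by blast

lemma c1_sesq: "sesquilinear c1" unfolding c1_def by (rule sesq_comb[OF a_sesq i_lin])
lemma c_sesq: "sesquilinear c" unfolding c_def by (rule sesq_comb[OF c1_sesq j_lin])
lemma c1_sym: "form_symmetric c1" unfolding c1_def by (rule sym_comb[OF a_sym])
lemma c_sym: "form_symmetric c" unfolding c_def by (rule sym_comb[OF c1_sym])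

lemma Ki_ex: "\<exists>K>0. \<forall>x. norm (i x) \<le> K * norm x" by (rule compact_clinear_bounded[OF i_compact])
lemma Kj_ex: "\<exists>K>0. \<forall>x. norm (j x) \<le> K * norm x" by (rule compact_clinear_bounded[OF j_compact])

lemma c_bnd: "\<exists>Cc. \<forall>u v. cmod (c u v) \<le> Cc * norm u * norm v"
proof -
  obtain Ca where Ca: "\<And>u v. cmod (a u v) \<le> Ca * norm u * norm v"
    using a_cont unfolding form_continuous_def by blast
  obtain Ki where Ki: "\<And>x. norm (i x) \<le> Ki * norm x" using Ki_ex by blast
  obtain Kj where Kj: "\<And>x. norm (j x) \<le> Kj * norm x" using Kj_ex by blast
  have c1b: "cmod (c1 u v) \<le> (Ca + cmod (complex_of_real lam) * Ki\<^sup>2) * norm u * norm v" for u v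
    unfolding c1_def by (rule bnd_comb[OF Ca Ki])
  have "cmod (c u v) \<le> ((Ca + cmod (complex_of_real lam) * Ki\<^sup>2) + cmod (complex_of_real mu) * Kj\<^sup>2) * norm u * norm v" for u v
    unfolding c_def by (rule bnd_comb[OF c1b Kj])
  then show ?thesis by blast
qed

lemma eig_iff:
  "eigenvalue_of (assoc_op i (\<lambda>u v. a u v - complex_of_real mu * cinner (j u) (j v))) (complex_of_real lam)
   \<longleftrightarrow> (\<exists>u. u \<noteq> 0 \<and> (\<forall>v. c u v = 0))"
proof
  assume "eigenvalue_of (assoc_op i (\<lambda>u v. a u v - complex_of_real mu * cinner (j u) (j v))) (complex_of_real lam)"
  then obtain x u f where x0: "x \<noteq> 0" and xf: "(x, complex_of_real lam *\<^sub>C x) = (i u, f)"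
      and eq: "\<forall>v. a u v - complex_of_real mu * cinner (j u) (j v) = cinner f (i v)"
    unfolding eigenvalue_of_def assoc_op_def by blast
  have xu: "x = i u" and fx: "f = complex_of_real lam *\<^sub>C i u" using xf by auto
  have "u \<noteq> 0" using x0 xu clinear_zero[OF i_lin] by auto
  moreover have "c u v = 0" for v
  proof -
    have "a u v - complex_of_real mu * cinner (j u) (j v) = complex_of_real lam * cinner (i u) (i v)"
      using eq fx by (simp add: cinner_scaleC_left)
    then show ?thesis unfolding c_def c1_def by (simp add: algebra_simps)
  qed
  ultimately show "\<exists>u. u \<noteq> 0 \<and> (\<forall>v. c u v = 0)" by blast
next
  assume "\<exists>u. u \<noteq> 0 \<and> (\<forall>v. c u v = 0)"
  then obtain u where u0: "u \<noteq> 0" and cu: "\<And>v. c u v = 0" by blast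
  have x0: "i u \<noteq> 0" using u0 i_inj clinear_zero[OF i_lin] by (metis injD)
  have "complex_of_real lam *\<^sub>C i u = i (complex_of_real lam *\<^sub>C u)" by (simp add: clinear_scaleC[OF i_lin])
  then have fcl: "complex_of_real lam *\<^sub>C i u \<in> closure (range i)"
    by (metis closure_subset rangeI subsetD)
  have eq: "\<forall>v. a u v - complex_of_real mu * cinner (j u) (j v) = cinner (complex_of_real lam *\<^sub>C i u) (i v)"
  proof
    fix v
    have "c u v = 0" by (rule cu)
    then show "a u v - complex_of_real mu * cinner (j u) (j v) = cinner (complex_of_real lam *\<^sub>C i u) (i v)"
      unfolding c_def c1_def by (simp add: cinner_scaleC_left algebra_simps)
  qed
  have "(i u, complex_of_real lam *\<^sub>C i u) \<in> assoc_op i (\<lambda>u v. a u v - complex_of_real mu * cinner (j u) (j v))"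
    unfolding assoc_op_def using fcl eq by blast
  then show "eigenvalue_of (assoc_op i (\<lambda>u v. a u v - complex_of_real mu * cinner (j u) (j v))) (complex_of_real lam)"
    unfolding eigenvalue_of_def using x0 by blast
qed

end

context sett begin

lemma e_ex: "\<exists>e Ce \<delta> \<omega>. cform e Ce \<delta> \<and>
   (\<forall>u v. c u v = e u v - complex_of_real (\<omega> + lam) * cinner (i u) (i v) - complex_of_real mu * cinner (j u) (j v))"
proof -
  obtain \<omega> \<delta> where \<omega>: "\<omega> > 0" and \<delta>: "\<delta> > 0"
      and ell: "\<And>u. Re (a u u) + \<omega> * (norm (i u))\<^sup>2 \<ge> \<delta> * (norm u)\<^sup>2"
    using a_ell unfolding form_elliptic_def by blast
  define e where "e = (\<lambda>u v. a u v - complex_of_real (- \<omega>) * cinner (i u) (i v))"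
  obtain Ca where Ca: "\<And>u v. cmod (a u v) \<le> Ca * norm u * norm v"
    using a_cont unfolding form_continuous_def by blast
  obtain Ki where Ki: "\<And>x. norm (i x) \<le> Ki * norm x" using Ki_ex by blast
  have "cform e (Ca + cmod (complex_of_real (- \<omega>)) * Ki\<^sup>2) \<delta>"
  proof
    show "sesquilinear e" unfolding e_def by (rule sesq_comb[OF a_sesq i_lin])
    show "form_symmetric e" unfolding e_def by (rule sym_comb[OF a_sym])
    show "cmod (e u v) \<le> (Ca + cmod (complex_of_real (- \<omega>)) * Ki\<^sup>2) * norm u * norm v" for u v
      unfolding e_def by (rule bnd_comb[OF Ca Ki])
    show "\<delta> * (norm u)\<^sup>2 \<le> Re (e u u)" for u
    proof -
      have "e u u = a u u + complex_of_real \<omega> * complex_of_real ((norm (i u))\<^sup>2)"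
        unfolding e_def cinner_self_norm by simp
      then have "Re (e u u) = Re (a u u) + \<omega> * (norm (i u))\<^sup>2" by simp
      then show ?thesis using ell[of u] by simp
    qed
    show "\<delta> > 0" by (rule \<delta>)
  qed
  moreover have "c u v = e u v - complex_of_real (\<omega> + lam) * cinner (i u) (i v) - complex_of_real mu * cinner (j u) (j v)" for u v
    unfolding c_def c1_def e_def by (simp add: algebra_simps)
  ultimately show ?thesis by blast
qed

end

lemma ar4: "(x::real) + y \<le> z + z \<Longrightarrow> 2 * (x + y) \<le> 4 * z" by simp

context sett begin

lemma c_scaleR_left: "c (r *\<^sub>R u) v = complex_of_real r * c u v"
  by (rule sesq_scaleR_left[OF c_sesq])

lemma cauchy_Y:
  fixes Y :: "nat \<Rightarrow> 'v"
  assumes Yn: "\<And>n. norm (Y n) = 1"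
    and Yc: "\<And>n v. cmod (c (Y n) v) \<le> inverse (real (Suc n)) * norm v"
    and iY: "Cauchy (\<lambda>n. i (Y n))" and jY: "Cauchy (\<lambda>n. j (Y n))"
  shows "Cauchy Y"
proof -
  obtain e Ce \<delta> \<omega> where ce: "cform e Ce \<delta>"
    and crel: "\<And>u v. c u v = e u v - complex_of_real (\<omega> + lam) * cinner (i u) (i v) - complex_of_real mu * cinner (j u) (j v)"
    using e_ex by blast
  interpret E: cform e Ce \<delta> by (rule ce)
  define A where "A = \<bar>\<omega> + lam\<bar> + \<bar>mu\<bar>"
  have A0: "A \<ge> 0" unfolding A_def by simp
  have key: "\<delta> * (norm (Y a - Y b))\<^sup>2 \<le> 2 * (inverse (real (Suc a)) + inverse (real (Suc b)))
      + A * ((norm (i (Y a) - i (Y b)))\<^sup>2 + (norm (j (Y a) - j (Y b)))\<^sup>2)" for a b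
  proof -
    define D where "D = Y a - Y b"
    have iD: "i D = i (Y a) - i (Y b)" unfolding D_def by (rule clinear_diff[OF i_lin])
    have jD: "j D = j (Y a) - j (Y b)" unfolding D_def by (rule clinear_diff[OF j_lin])
    have nD: "norm D \<le> 2" unfolding D_def using norm_triangle_ineq4[of "Y a" "Y b"] Yn by simp
    have "c D D = e D D - complex_of_real (\<omega> + lam) * complex_of_real ((norm (i D))\<^sup>2)
        - complex_of_real mu * complex_of_real ((norm (j D))\<^sup>2)"
      unfolding crel cinner_self_norm ..
    then have ReD: "Re (e D D) = Re (c D D) + (\<omega> + lam) * (norm (i D))\<^sup>2 + mu * (norm (j D))\<^sup>2"
      by simp
    have "c D D = c (Y a) D - c (Y b) D" unfolding D_def by (rule sesq_diff_left[OF c_sesq])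
    then have "cmod (c D D) \<le> cmod (c (Y a) D) + cmod (c (Y b) D)"
      using norm_triangle_ineq4 by simp
    also have "\<dots> \<le> inverse (real (Suc a)) * norm D + inverse (real (Suc b)) * norm D"
      using Yc[of a D] Yc[of b D] by simp
    also have "\<dots> \<le> inverse (real (Suc a)) * 2 + inverse (real (Suc b)) * 2"
      using nD by (intro add_mono mult_left_mono) auto
    finally have cDD: "Re (c D D) \<le> 2 * (inverse (real (Suc a)) + inverse (real (Suc b)))"
      using complex_Re_le_cmod[of "c D D"] by simp
    have t1: "(\<omega> + lam) * (norm (i D))\<^sup>2 \<le> \<bar>\<omega> + lam\<bar> * (norm (i D))\<^sup>2"
      by (intro mult_right_mono) auto
    have t2: "mu * (norm (j D))\<^sup>2 \<le> \<bar>mu\<bar> * (norm (j D))\<^sup>2"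
      by (intro mult_right_mono) auto
    have t3: "\<bar>\<omega> + lam\<bar> * (norm (i D))\<^sup>2 + \<bar>mu\<bar> * (norm (j D))\<^sup>2 \<le> A * ((norm (i D))\<^sup>2 + (norm (j D))\<^sup>2)"
      unfolding A_def by (simp add: algebra_simps)
    have "\<delta> * (norm D)\<^sup>2 \<le> Re (e D D)" by (rule E.coer)
    then show ?thesis using ReD cDD t1 t2 t3 unfolding iD[symmetric] jD[symmetric] D_def[symmetric]
      by linarith
  qed
  show "Cauchy Y"
    unfolding Cauchy_def
  proof (intro allI impI)
    fix \<epsilon> :: real assume \<epsilon>: "\<epsilon> > 0"
    define t where "t = \<delta> * \<epsilon>\<^sup>2 / 2"
    have t0: "t > 0" unfolding t_def using \<epsilon> E.dpos by simp
    obtain N1 where N1: "inverse (real (Suc N1)) < t / 4" using reals_Archimedean[of "t/4"] t0 by auto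
    define \<eta> where "\<eta> = min 1 (t / (2 * (A + 1)))"
    have \<eta>0: "\<eta> > 0" unfolding \<eta>_def using t0 A0 by simp
    have \<eta>1: "\<eta> \<le> 1" unfolding \<eta>_def by simp
    have \<eta>t: "\<eta> \<le> t / (2 * (A + 1))" unfolding \<eta>_def by simp
    obtain N2 where N2: "\<And>m n. m \<ge> N2 \<Longrightarrow> n \<ge> N2 \<Longrightarrow> dist (i (Y m)) (i (Y n)) < \<eta>"
      using iY \<eta>0 unfolding Cauchy_def by blast
    obtain N3 where N3: "\<And>m n. m \<ge> N3 \<Longrightarrow> n \<ge> N3 \<Longrightarrow> dist (j (Y m)) (j (Y n)) < \<eta>"
      using jY \<eta>0 unfolding Cauchy_def by blast
    define N where "N = max N1 (max N2 N3)"
    have "dist (Y m) (Y n) < \<epsilon>" if m: "m \<ge> N" and n: "n \<ge> N" for m n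
    proof -
      have im: "inverse (real (Suc m)) \<le> inverse (real (Suc N1))" using m by (simp add: N_def field_simps)
      have in': "inverse (real (Suc n)) \<le> inverse (real (Suc N1))" using n by (simp add: N_def field_simps)
      have di: "norm (i (Y m) - i (Y n)) < \<eta>" using N2[of m n] m n by (simp add: N_def dist_norm)
      have dj: "norm (j (Y m) - j (Y n)) < \<eta>" using N3[of m n] m n by (simp add: N_def dist_norm)
      have \<eta>sq: "\<eta>\<^sup>2 \<le> \<eta>" using \<eta>0 \<eta>1 by (simp add: power2_eq_square mult_left_le)
      have si: "(norm (i (Y m) - i (Y n)))\<^sup>2 \<le> \<eta>"
        using power_strict_mono[OF di norm_ge_zero, of 2] \<eta>sq by simp
      have sj: "(norm (j (Y m) - j (Y n)))\<^sup>2 \<le> \<eta>"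
        using power_strict_mono[OF dj norm_ge_zero, of 2] \<eta>sq by simp
      have "A * ((norm (i (Y m) - i (Y n)))\<^sup>2 + (norm (j (Y m) - j (Y n)))\<^sup>2) \<le> A * (2 * \<eta>)"
        using si sj A0 by (intro mult_left_mono) auto
      also have "\<dots> \<le> A * (t / (A + 1))" using \<eta>t A0 by (intro mult_left_mono) (auto simp: field_simps)
      also have "\<dots> < t"
      proof -
        have "A * t < (A + 1) * t" using t0 by simp
        then show ?thesis using A0 by (simp add: field_simps)
      qed
      finally have part2: "A * ((norm (i (Y m) - i (Y n)))\<^sup>2 + (norm (j (Y m) - j (Y n)))\<^sup>2) < t" .
      have h1: "2 * (inverse (real (Suc m)) + inverse (real (Suc n))) < t"
      proof -
        have "2 * (inverse (real (Suc m)) + inverse (real (Suc n))) \<le> 4 * inverse (real (Suc N1))"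
          by (rule ar4[OF add_mono[OF im in']])
        also have "\<dots> < t" using N1 by simp
        finally show ?thesis .
      qed
      have h2: "\<delta> * \<epsilon>\<^sup>2 = 2 * t" unfolding t_def by simp
      have "\<delta> * (norm (Y m - Y n))\<^sup>2 < \<delta> * \<epsilon>\<^sup>2"
        using key[of m n] part2 h1 h2 by linarith
      then have "(norm (Y m - Y n))\<^sup>2 < \<epsilon>\<^sup>2" using E.dpos by simp
      then have "norm (Y m - Y n) < \<epsilon>" using \<epsilon> by (simp add: power_less_imp_less_base)
      then show ?thesis by (simp add: dist_norm)
    qed
    then show "\<exists>M. \<forall>m\<ge>M. \<forall>n\<ge>M. dist (Y m) (Y n) < \<epsilon>" by blast
  qed
qed

end

context sett begin

lemma estimate:
  assumes noeig: "\<And>u. (\<forall>v. c u v = 0) \<Longrightarrow> u = 0"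
  shows "\<exists>C. \<forall>u M. 0 \<le> M \<longrightarrow> (\<forall>v. cmod (c u v) \<le> M * norm v) \<longrightarrow> norm u \<le> C * M"
proof (rule ccontr)
  assume neg: "\<not> (\<exists>C. \<forall>u M. 0 \<le> M \<longrightarrow> (\<forall>v. cmod (c u v) \<le> M * norm v) \<longrightarrow> norm u \<le> C * M)"
  have "\<forall>n. \<exists>p. 0 \<le> snd p \<and> (\<forall>v. cmod (c (fst p) v) \<le> snd p * norm v) \<and> norm (fst p) > real (Suc n) * snd p"
  proof
    fix n
    from neg have "\<not> (\<forall>u M. 0 \<le> M \<longrightarrow> (\<forall>v. cmod (c u v) \<le> M * norm v) \<longrightarrow> norm u \<le> real (Suc n) * M)"
      by blast
    then obtain u M where "0 \<le> M" "\<forall>v. cmod (c u v) \<le> M * norm v" "\<not> norm u \<le> real (Suc n) * M"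
      by blast
    then show "\<exists>p. 0 \<le> snd p \<and> (\<forall>v. cmod (c (fst p) v) \<le> snd p * norm v) \<and> norm (fst p) > real (Suc n) * snd p"
      by (intro exI[of _ "(u, M)"]) auto
  qed
  then obtain P where P0: "\<And>n. 0 \<le> snd (P n)" and Pc: "\<And>n v. cmod (c (fst (P n)) v) \<le> snd (P n) * norm v"
      and Pn: "\<And>n. norm (fst (P n)) > real (Suc n) * snd (P n)"
    using choice[of "\<lambda>n p. 0 \<le> snd p \<and> (\<forall>v. cmod (c (fst p) v) \<le> snd p * norm v) \<and> norm (fst p) > real (Suc n) * snd p"]
    by blast
  define U where "U n = fst (P n)" for n
  define Mn where "Mn n = snd (P n)" for n
  have Upos: "norm (U n) > 0" for n
  proof -
    have "real (Suc n) * Mn n \<ge> 0" using P0[of n] unfolding Mn_def by simp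
    then show ?thesis using Pn[of n] unfolding U_def Mn_def by linarith
  qed
  define Z where "Z n = (1 / norm (U n)) *\<^sub>R U n" for n
  have Zn: "norm (Z n) = 1" for n unfolding Z_def using Upos[of n] by simp
  have Zc: "cmod (c (Z n) v) \<le> inverse (real (Suc n)) * norm v" for n v
  proof -
    have "c (Z n) v = complex_of_real (1 / norm (U n)) * c (U n) v" unfolding Z_def by (rule c_scaleR_left)
    then have "cmod (c (Z n) v) = cmod (c (U n) v) / norm (U n)" using Upos[of n] by (simp add: norm_mult norm_divide)
    also have "\<dots> \<le> Mn n * norm v / norm (U n)"
      using Pc[of n v] Upos[of n] unfolding U_def Mn_def by (simp add: divide_right_mono)
    also have "\<dots> \<le> inverse (real (Suc n)) * norm v"
    proof -
      have "Mn n / norm (U n) \<le> inverse (real (Suc n))"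
        using Pn[of n] Upos[of n] unfolding U_def[symmetric] Mn_def[symmetric]
        by (simp add: field_simps)
      then have "Mn n / norm (U n) * norm v \<le> inverse (real (Suc n)) * norm v"
        by (rule mult_right_mono) simp
      then show ?thesis by simp
    qed
    finally show ?thesis .
  qed
  obtain r1 l1 where r1: "strict_mono r1" and l1: "(\<lambda>n. i (Z (r1 n))) \<longlonglongrightarrow> l1"
    using compact_clinear_subseq[OF i_compact, of Z 1] Zn by auto
  obtain r2 l2 where r2: "strict_mono r2" and l2: "(\<lambda>n. j ((Z \<circ> r1) (r2 n))) \<longlonglongrightarrow> l2"
    using compact_clinear_subseq[OF j_compact, of "Z \<circ> r1" 1] Zn by auto
  define s where "s = r1 \<circ> r2"
  define Y where "Y n = Z (s n)" for n
  have s: "strict_mono s" unfolding s_def using r1 r2 by (rule strict_mono_o)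
  have iY: "(\<lambda>n. i (Y n)) \<longlonglongrightarrow> l1"
  proof -
    have "((\<lambda>n. i (Z (r1 n))) \<circ> r2) \<longlonglongrightarrow> l1" using l1 r2 by (rule LIMSEQ_subseq_LIMSEQ)
    then show ?thesis unfolding Y_def s_def by (simp add: o_def)
  qed
  have jY: "(\<lambda>n. j (Y n)) \<longlonglongrightarrow> l2" using l2 unfolding Y_def s_def by (simp add: o_def)
  have Yn: "norm (Y n) = 1" for n unfolding Y_def by (rule Zn)
  have Yc: "cmod (c (Y n) v) \<le> inverse (real (Suc n)) * norm v" for n v
  proof -
    have "n \<le> s n" using s by (rule seq_suble)
    then have "inverse (real (Suc (s n))) \<le> inverse (real (Suc n))" by (simp add: field_simps)
    then have "inverse (real (Suc (s n))) * norm v \<le> inverse (real (Suc n)) * norm v"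
      by (rule mult_right_mono) simp
    then show ?thesis using Zc[of "s n" v] unfolding Y_def by linarith
  qed
  have "Cauchy Y"
  proof (rule cauchy_Y[OF Yn Yc])
    show "Cauchy (\<lambda>n. i (Y n))" using iY by (rule LIMSEQ_imp_Cauchy)
    show "Cauchy (\<lambda>n. j (Y n))" using jY by (rule LIMSEQ_imp_Cauchy)
  qed
  then obtain y where Yy: "Y \<longlonglongrightarrow> y" using Cauchy_convergent convergent_def by blast
  have "(\<lambda>n. norm (Y n)) \<longlonglongrightarrow> norm y" using Yy by (rule tendsto_norm)
  moreover have "(\<lambda>n. norm (Y n)) \<longlonglongrightarrow> 1" using Yn by simp
  ultimately have ny: "norm y = 1" using LIMSEQ_unique by blast
  obtain Cc where Cc: "\<And>u v. cmod (c u v) \<le> Cc * norm u * norm v" using c_bnd by blast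
  have "c y v = 0" for v
  proof -
    have le: "cmod (c y v) \<le> Cc * norm (y - Y n) * norm v + inverse (real (Suc n)) * norm v" for n
    proof -
      have "c y v = c (y - Y n) v + c (Y n) v" by (simp add: sesq_diff_left[OF c_sesq])
      then have "cmod (c y v) \<le> cmod (c (y - Y n) v) + cmod (c (Y n) v)" using norm_triangle_ineq by simp
      then show ?thesis using Cc[of "y - Y n" v] Yc[of n v] by linarith
    qed
    have "(\<lambda>n. y - Y n) \<longlonglongrightarrow> y - y" using Yy by (intro tendsto_intros)
    then have "(\<lambda>n. norm (y - Y n)) \<longlonglongrightarrow> norm (y - y)" by (rule tendsto_norm)
    then have "(\<lambda>n. Cc * norm (y - Y n) * norm v + inverse (real (Suc n)) * norm v) \<longlonglongrightarrow> Cc * 0 * norm v + 0 * norm v"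
      by (intro tendsto_intros LIMSEQ_inverse_real_of_nat) simp
    then have "cmod (c y v) \<le> Cc * 0 * norm v + 0 * norm v"
      using le by (intro LIMSEQ_le_const) auto
    then show ?thesis by simp
  qed
  then have "y = 0" using noeig by blast
  then show False using ny by simp
qed

end

context sett begin

lemma solve:
  assumes noeig: "\<And>u. (\<forall>v. c u v = 0) \<Longrightarrow> u = 0"
    and ladd: "\<And>v w. l (v + w) = l v + l w" and lscale: "\<And>k v. l (k *\<^sub>C v) = cnj k * l v"
    and lbnd: "\<And>v. cmod (l v) \<le> L * norm v"
  shows "\<exists>u. \<forall>v. c u v = l v"
proof -
  obtain e Ce \<delta> \<omega> where ce: "cform e Ce \<delta>"
    and crel: "\<And>u v. c u v = e u v - complex_of_real (\<omega> + lam) * cinner (i u) (i v) - complex_of_real mu * cinner (j u) (j v)"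
    using e_ex by blast
  interpret E: cform e Ce \<delta> by (rule ce)
  obtain Cest where Cest: "\<And>u M. 0 \<le> M \<Longrightarrow> (\<forall>v. cmod (c u v) \<le> M * norm v) \<Longrightarrow> norm u \<le> Cest * M"
    using estimate[OF noeig] by blast
  obtain Cc where Cc: "\<And>u v. cmod (c u v) \<le> Cc * norm u * norm v" using c_bnd by blast
  have cdiff: "c (u - w) v = c u v - c w v" for u w v by (rule sesq_diff_left[OF c_sesq])
  have cadd: "c (u + w) v = c u v + c w v" for u w v by (rule sesq_add_left[OF c_sesq])
  have cscale: "c (k *\<^sub>C u) v = k * c u v" for k u v by (rule sesq_scale_left[OF c_sesq])
  have caddr: "c u (v + w) = c u v + c u w" for u v w by (rule sesq_add_right[OF c_sesq])
  have cscaler: "c u (k *\<^sub>C v) = cnj k * c u v" for k u v by (rule sesq_scale_right[OF c_sesq])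
  have eCe: "cmod (e u v) \<le> \<bar>Ce\<bar> * norm u * norm v" for u v
  proof -
    have "cmod (e u v) \<le> Ce * norm u * norm v" by (rule E.bnd)
    also have "\<dots> \<le> \<bar>Ce\<bar> * norm u * norm v" by (intro mult_right_mono) auto
    finally show ?thesis .
  qed
  define R where "R = {h. \<exists>u. \<forall>v. c u v = e h v}"
  have Rclosed: "closed R"
    unfolding closed_sequential_limits
  proof (intro allI impI)
    fix x h assume as: "(\<forall>n. x n \<in> R) \<and> x \<longlonglongrightarrow> h"
    then have "\<forall>n. \<exists>u. \<forall>v. c u v = e (x n) v" unfolding R_def by blast
    then obtain u where u: "\<And>n v. c (u n) v = e (x n) v" using choice[of "\<lambda>n u. \<forall>v. c u v = e (x n) v"] by blast
    have ud: "norm (u a - u b) \<le> Cest * (\<bar>Ce\<bar> * norm (x a - x b))" for a b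
    proof (rule Cest)
      show "0 \<le> \<bar>Ce\<bar> * norm (x a - x b)" by simp
      show "\<forall>v. cmod (c (u a - u b) v) \<le> \<bar>Ce\<bar> * norm (x a - x b) * norm v"
      proof
        fix v
        have "c (u a - u b) v = e (x a - x b) v" by (simp add: cdiff u E.diff_left)
        then show "cmod (c (u a - u b) v) \<le> \<bar>Ce\<bar> * norm (x a - x b) * norm v" using eCe by simp
      qed
    qed
    define K where "K = \<bar>Cest\<bar> * \<bar>Ce\<bar> + 1"
    have K0: "K > 0" unfolding K_def by (simp add: add_nonneg_pos)
    have udK: "norm (u a - u b) \<le> K * norm (x a - x b)" for a b
    proof -
      have "Cest * (\<bar>Ce\<bar> * norm (x a - x b)) \<le> \<bar>Cest\<bar> * (\<bar>Ce\<bar> * norm (x a - x b))"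
        by (intro mult_right_mono) auto
      also have "\<dots> \<le> K * norm (x a - x b)" unfolding K_def by (simp add: algebra_simps)
      finally show ?thesis using ud[of a b] by linarith
    qed
    have "Cauchy x" using as LIMSEQ_imp_Cauchy by blast
    have "Cauchy u"
      unfolding Cauchy_def
    proof (intro allI impI)
      fix \<epsilon> :: real assume \<epsilon>: "\<epsilon> > 0"
      then have "\<epsilon> / K > 0" using K0 by simp
      then obtain N where N: "\<And>a b. a \<ge> N \<Longrightarrow> b \<ge> N \<Longrightarrow> dist (x a) (x b) < \<epsilon> / K"
        using \<open>Cauchy x\<close> unfolding Cauchy_def by blast
      have "dist (u a) (u b) < \<epsilon>" if "a \<ge> N" "b \<ge> N" for a b
      proof -
        have "norm (x a - x b) < \<epsilon> / K" using N[OF that] by (simp add: dist_norm)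
        then have "K * norm (x a - x b) < \<epsilon>" using K0 by (simp add: field_simps)
        then show ?thesis using udK[of a b] by (simp add: dist_norm)
      qed
      then show "\<exists>M. \<forall>a\<ge>M. \<forall>b\<ge>M. dist (u a) (u b) < \<epsilon>" by blast
    qed
    then obtain u0 where u0: "u \<longlonglongrightarrow> u0" using Cauchy_convergent convergent_def by blast
    have "c u0 v = e h v" for v
    proof -
      have le: "cmod (c u0 v - e h v) \<le> Cc * norm (u0 - u n) * norm v + \<bar>Ce\<bar> * norm (h - x n) * norm v" for n
      proof -
        have "c u0 v - e h v = c (u0 - u n) v - e (h - x n) v" by (simp add: cdiff E.diff_left u)
        then have "cmod (c u0 v - e h v) \<le> cmod (c (u0 - u n) v) + cmod (e (h - x n) v)"
          using norm_triangle_ineq4 by simp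
        then show ?thesis using Cc[of "u0 - u n" v] eCe[of "h - x n" v] by linarith
      qed
      have "(\<lambda>n. u0 - u n) \<longlonglongrightarrow> u0 - u0" using u0 by (intro tendsto_intros)
      then have n1: "(\<lambda>n. norm (u0 - u n)) \<longlonglongrightarrow> norm (u0 - u0)" by (rule tendsto_norm)
      have "(\<lambda>n. h - x n) \<longlonglongrightarrow> h - h" using as by (intro tendsto_intros) auto
      then have n2: "(\<lambda>n. norm (h - x n)) \<longlonglongrightarrow> norm (h - h)" by (rule tendsto_norm)
      have "(\<lambda>n. Cc * norm (u0 - u n) * norm v + \<bar>Ce\<bar> * norm (h - x n) * norm v) \<longlonglongrightarrow>
          Cc * norm (u0 - u0) * norm v + \<bar>Ce\<bar> * norm (h - h) * norm v"
        using u0 as by (intro tendsto_intros) auto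
      then have "cmod (c u0 v - e h v) \<le> Cc * norm (u0 - u0) * norm v + \<bar>Ce\<bar> * norm (h - h) * norm v"
        using le by (intro LIMSEQ_le_const) auto
      then show ?thesis by simp
    qed
    then show "h \<in> R" unfolding R_def by blast
  qed
  have R0: "0 \<in> R" unfolding R_def by (intro CollectI exI[of _ 0]) (simp add: sesq_zero_left[OF c_sesq])
  have Radd: "x + y \<in> R" if "x \<in> R" "y \<in> R" for x y
  proof -
    obtain u where "\<And>v. c u v = e x v" using \<open>x \<in> R\<close> unfolding R_def by blast
    moreover obtain w where "\<And>v. c w v = e y v" using \<open>y \<in> R\<close> unfolding R_def by blast
    ultimately have "\<forall>v. c (u + w) v = e (x + y) v" by (simp add: cadd E.add_left)
    then show ?thesis unfolding R_def by blast
  qed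
  have Rscale: "k *\<^sub>C x \<in> R" if "x \<in> R" for k x
  proof -
    obtain u where "\<And>v. c u v = e x v" using \<open>x \<in> R\<close> unfolding R_def by blast
    then have "\<forall>v. c (k *\<^sub>C u) v = e (k *\<^sub>C x) v" by (simp add: cscale E.scale_left)
    then show ?thesis unfolding R_def by blast
  qed
  obtain g where g: "\<And>v. l v = e g v" using E.riesz[OF ladd lscale lbnd] by blast
  obtain p where pR: "p \<in> R" and orth: "\<And>m. m \<in> R \<Longrightarrow> e (g - p) m = 0"
    using E.projection[OF Rclosed R0 Radd Rscale] by blast
  define w where "w = g - p"
  have cuw: "c u w = 0" for u
  proof -
    have "\<exists>h. \<forall>v. c u v = e h v"
    proof (rule E.riesz)
      show "c u (v + w) = c u v + c u w" for v w by (rule caddr)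
      show "c u (k *\<^sub>C v) = cnj k * c u v" for k v by (rule cscaler)
      show "cmod (c u v) \<le> (Cc * norm u) * norm v" for v using Cc[of u v] by simp
    qed
    then obtain h where h: "\<And>v. c u v = e h v" by blast
    then have "h \<in> R" unfolding R_def by blast
    then have "e w h = 0" unfolding w_def by (rule orth)
    then have "e h w = 0" using E.swap[of w h] by simp
    then show ?thesis using h by simp
  qed
  have "\<forall>v. c w v = 0"
  proof
    fix v
    have "c w v = cnj (c v w)" by (rule sym_swap[OF c_sym])
    then show "c w v = 0" using cuw[of v] by simp
  qed
  then have "w = 0" by (rule noeig)
  then have "g \<in> R" using pR unfolding w_def by simp
  then obtain u where "\<And>v. c u v = e g v" unfolding R_def by blast
  then show ?thesis using g by metis
qed

end

context sett begin

lemma N_mem: "(x, \<psi>) \<in> DtN_graph i j a lam \<longleftrightarrow> (\<exists>u. x = j u \<and> (\<forall>v. c1 u v = cinner \<psi> (j v)))"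
  unfolding DtN_graph_def c1_def by blast

lemma N_add:
  assumes "(x, \<psi>) \<in> DtN_graph i j a lam" "(x', \<psi>') \<in> DtN_graph i j a lam"
  shows "(x + x', \<psi> + \<psi>') \<in> DtN_graph i j a lam"
proof -
  obtain u where u: "x = j u" "\<And>v. c1 u v = cinner \<psi> (j v)" using assms(1) unfolding N_mem by blast
  obtain u' where u': "x' = j u'" "\<And>v. c1 u' v = cinner \<psi>' (j v)" using assms(2) unfolding N_mem by blast
  have "x + x' = j (u + u')" using u u' by (simp add: clinear_add[OF j_lin])
  moreover have "\<forall>v. c1 (u + u') v = cinner (\<psi> + \<psi>') (j v)"
    using u u' by (simp add: sesq_add_left[OF c1_sesq] cinner_add_left)
  ultimately show ?thesis unfolding N_mem by blast
qed

lemma N_scale: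
  assumes "(x, \<psi>) \<in> DtN_graph i j a lam"
  shows "(k *\<^sub>C x, k *\<^sub>C \<psi>) \<in> DtN_graph i j a lam"
proof -
  obtain u where u: "x = j u" "\<And>v. c1 u v = cinner \<psi> (j v)" using assms(1) unfolding N_mem by blast
  have "k *\<^sub>C x = j (k *\<^sub>C u)" using u by (simp add: clinear_scaleC[OF j_lin])
  moreover have "\<forall>v. c1 (k *\<^sub>C u) v = cinner (k *\<^sub>C \<psi>) (j v)"
    using u by (simp add: sesq_scale_left[OF c1_sesq] cinner_scaleC_left)
  ultimately show ?thesis unfolding N_mem by blast
qed

lemma c_c1: "c u v = c1 u v - complex_of_real mu * cinner (j u) (j v)"
  unfolding c_def by simp

end

theorem lemma2p5:
  fixes i :: "'v::chilbert_space \<Rightarrow> 'h::chilbert_space"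
    and j :: "'v \<Rightarrow> 'k::chilbert_space"
    and a :: "'v \<Rightarrow> 'v \<Rightarrow> complex"
    and lam mu :: real
  assumes i_inj: "inj i"
    and i_compact: "compact_clinear i"
    and j_compact: "compact_clinear j"
    and a_sesq: "sesquilinear a"
    and a_pos: "form_positive a"
    and a_sym: "form_symmetric a"
    and a_cont: "form_continuous a"
    and a_ell: "form_elliptic a i"
    and no_Dir_eigvec: "\<not> (\<exists>x. eigenvector_of (assoc_op i a) x \<and> x \<in> i ` {w. j w = 0})"
  shows "eigenvalue_of
           (assoc_op i (\<lambda>u v. a u v - complex_of_real mu * cinner (j u) (j v)))
           (complex_of_real lam)
         \<longleftrightarrow> complex_of_real mu \<in> graph_spectrum (DtN_graph i j a lam)"
proof -
  interpret S: sett i j a lam mu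
    by (intro sett.intro i_inj i_compact j_compact a_sesq a_sym a_cont a_ell)
  define N where "N = DtN_graph i j a lam"
  define X where "X = closure (Domain N)"
  define G where "G = single_valued_part N"
  have G_def': "G = N \<inter> (X \<times> X)" unfolding G_def X_def single_valued_part_def by simp
  have spec_def': "graph_spectrum N = spectrum_op X G" unfolding graph_spectrum_def X_def G_def by simp
  obtain Kj where Kj0: "Kj > 0" and Kj: "\<And>x. norm (j x) \<le> Kj * norm x" using S.Kj_ex by blast
  have DomX: "x \<in> X" if "(x, z) \<in> N" for x z
  proof -
    have "x \<in> Domain N" using that by blast
    then show ?thesis unfolding X_def by (rule closure_subset[THEN subsetD])
  qed
  show ?thesis
    unfolding S.eig_iff N_def[symmetric] spec_def'
  proof
    assume "\<exists>u. u \<noteq> 0 \<and> (\<forall>v. S.c u v = 0)"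
    then obtain u where u0: "u \<noteq> 0" and cu: "\<And>v. S.c u v = 0" by blast
    have ju: "j u \<noteq> 0"
    proof
      assume ju0: "j u = 0"
      have x0: "i u \<noteq> 0" using u0 i_inj clinear_zero[OF S.i_lin] by (metis injD)
      have "complex_of_real lam *\<^sub>C i u = i (complex_of_real lam *\<^sub>C u)" by (simp add: clinear_scaleC[OF S.i_lin])
      then have fcl: "complex_of_real lam *\<^sub>C i u \<in> closure (range i)"
        by (metis closure_subset rangeI subsetD)
      have "\<forall>v. a u v = cinner (complex_of_real lam *\<^sub>C i u) (i v)"
      proof
        fix v
        have "S.c u v = 0" by (rule cu)
        then show "a u v = cinner (complex_of_real lam *\<^sub>C i u) (i v)"
          unfolding S.c_def S.c1_def ju0 by (simp add: cinner_scaleC_left)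
      qed
      then have "(i u, complex_of_real lam *\<^sub>C i u) \<in> assoc_op i a"
        unfolding assoc_op_def using fcl by blast
      then have "eigenvector_of (assoc_op i a) (i u)" unfolding eigenvector_of_def using x0 by blast
      moreover have "i u \<in> i ` {w. j w = 0}" using ju0 by blast
      ultimately show False using no_Dir_eigvec by blast
    qed
    have mem: "(j u, complex_of_real mu *\<^sub>C j u) \<in> N"
      unfolding N_def S.N_mem
    proof (intro exI conjI allI)
      show "j u = j u" ..
      fix v
      have "S.c u v = 0" by (rule cu)
      then show "S.c1 u v = cinner (complex_of_real mu *\<^sub>C j u) (j v)"
        unfolding S.c_c1 by (simp add: cinner_scaleC_left)
    qed
    have "(complex_of_real mu *\<^sub>C j u, complex_of_real mu *\<^sub>C (complex_of_real mu *\<^sub>C j u)) \<in> N"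
      using mem unfolding N_def by (rule S.N_scale)
    then have "complex_of_real mu *\<^sub>C j u \<in> X" by (rule DomX)
    moreover have "j u \<in> X" using mem by (rule DomX)
    ultimately have inG: "(j u, complex_of_real mu *\<^sub>C j u) \<in> G" using mem unfolding G_def' by blast
    show "complex_of_real mu \<in> spectrum_op X G"
      unfolding spectrum_op_def
    proof
      show "complex_of_real mu \<in> UNIV" ..
      show "complex_of_real mu \<notin> resolvent_set_op X G"
      proof
        assume "complex_of_real mu \<in> resolvent_set_op X G"
        then obtain C where C: "\<forall>(x, z)\<in>G. norm x \<le> C * norm (z - complex_of_real mu *\<^sub>C x)"
          unfolding resolvent_set_op_def by blast
        then have "norm (j u) \<le> C * norm (complex_of_real mu *\<^sub>C j u - complex_of_real mu *\<^sub>C j u)"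
          using inG by blast
        then have "norm (j u) \<le> 0" by simp
        then show False using ju by simp
      qed
    qed
  next
    assume spec: "complex_of_real mu \<in> spectrum_op X G"
    show "\<exists>u. u \<noteq> 0 \<and> (\<forall>v. S.c u v = 0)"
    proof (rule ccontr)
      assume "\<not> (\<exists>u. u \<noteq> 0 \<and> (\<forall>v. S.c u v = 0))"
      then have noeig: "\<And>u. (\<forall>v. S.c u v = 0) \<Longrightarrow> u = 0" by blast
      obtain Cest where Cest: "\<And>u M. 0 \<le> M \<Longrightarrow> (\<forall>v. cmod (S.c u v) \<le> M * norm v) \<Longrightarrow> norm u \<le> Cest * M"
        using S.estimate[OF noeig] by blast
      have surj: "\<exists>x z. (x, z) \<in> G \<and> z - complex_of_real mu *\<^sub>C x = y" if yX: "y \<in> X" for y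
      proof -
        have "\<exists>u. \<forall>v. S.c u v = cinner y (j v)"
        proof (rule S.solve[OF noeig])
          show "cinner y (j (v + w)) = cinner y (j v) + cinner y (j w)" for v w
            by (simp add: clinear_add[OF S.j_lin] cinner_add_right)
          show "cinner y (j (k *\<^sub>C v)) = cnj k * cinner y (j v)" for k v
            by (simp add: clinear_scaleC[OF S.j_lin] cinner_scaleC_right)
          show "cmod (cinner y (j v)) \<le> (norm y * Kj) * norm v" for v
          proof -
            have "cmod (cinner y (j v)) \<le> norm y * norm (j v)" by (rule cauchy_schwarz_c)
            also have "\<dots> \<le> norm y * (Kj * norm v)" using Kj[of v] by (intro mult_left_mono) auto
            finally show ?thesis by (simp add: mult.assoc)
          qed
        qed
        then obtain u where u: "\<And>v. S.c u v = cinner y (j v)" by blast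
        define z where "z = y + complex_of_real mu *\<^sub>C j u"
        have memN: "(j u, z) \<in> N"
          unfolding N_def S.N_mem
        proof (intro exI conjI allI)
          show "j u = j u" ..
          fix v
          have "S.c u v = cinner y (j v)" by (rule u)
          then show "S.c1 u v = cinner z (j v)"
            unfolding S.c_c1 z_def by (simp add: cinner_add_left cinner_scaleC_left diff_eq_eq)
        qed
        have xX: "j u \<in> X" using memN by (rule DomX)
        have zX: "z \<in> X"
        proof -
          obtain ys where ys: "\<And>n. ys n \<in> Domain N" and ysy: "ys \<longlonglongrightarrow> y"
            using yX unfolding X_def closure_sequential by blast
          have d1: "ys n + complex_of_real mu *\<^sub>C j u \<in> Domain N" for n
          proof -
            obtain \<psi> where "(ys n, \<psi>) \<in> N" using ys[of n] by blast
            moreover have "(complex_of_real mu *\<^sub>C j u, complex_of_real mu *\<^sub>C z) \<in> N"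
              using memN unfolding N_def by (rule S.N_scale)
            ultimately have "(ys n + complex_of_real mu *\<^sub>C j u, \<psi> + complex_of_real mu *\<^sub>C z) \<in> N"
              unfolding N_def by (rule S.N_add)
            then show ?thesis by blast
          qed
          have d2: "(\<lambda>n. ys n + complex_of_real mu *\<^sub>C j u) \<longlonglongrightarrow> z"
            unfolding z_def using ysy by (intro tendsto_add tendsto_const)
          show ?thesis unfolding X_def closure_sequential
            by (rule exI[of _ "\<lambda>n. ys n + complex_of_real mu *\<^sub>C j u"], intro conjI allI, rule d1, rule d2)
        qed
        have "(j u, z) \<in> G" unfolding G_def' using memN xX zX by blast
        moreover have "z - complex_of_real mu *\<^sub>C j u = y" unfolding z_def by simp
        ultimately show ?thesis by blast
      qed
      have bound: "norm x \<le> (Kj * Cest * Kj) * norm (z - complex_of_real mu *\<^sub>C x)" if xz: "(x, z) \<in> G" for x z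
      proof -
        have "(x, z) \<in> N" using xz unfolding G_def' by blast
        then obtain u where xu: "x = j u" and u: "\<And>v. S.c1 u v = cinner z (j v)"
          unfolding N_def S.N_mem by blast
        define M where "M = norm (z - complex_of_real mu *\<^sub>C x) * Kj"
        have M0: "0 \<le> M" unfolding M_def using Kj0 by simp
        have "\<forall>v. cmod (S.c u v) \<le> M * norm v"
        proof
          fix v
          have "S.c u v = cinner (z - complex_of_real mu *\<^sub>C x) (j v)"
            unfolding S.c_c1 u xu by (simp add: cinner_diff_left cinner_scaleC_left)
          then have "cmod (S.c u v) \<le> norm (z - complex_of_real mu *\<^sub>C x) * norm (j v)"
            using cauchy_schwarz_c by metis
          also have "\<dots> \<le> norm (z - complex_of_real mu *\<^sub>C x) * (Kj * norm v)"
            using Kj[of v] by (intro mult_left_mono) auto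
          finally show "cmod (S.c u v) \<le> M * norm v" unfolding M_def by (simp add: mult.assoc)
        qed
        then have "norm u \<le> Cest * M" using Cest[OF M0] by blast
        then have "Kj * norm u \<le> Kj * (Cest * M)" using Kj0 by simp
        then have "norm x \<le> Kj * (Cest * M)" using Kj[of u] xu by simp
        then show ?thesis unfolding M_def by (simp add: algebra_simps)
      qed
      have "complex_of_real mu \<in> resolvent_set_op X G"
        unfolding resolvent_set_op_def
      proof (intro CollectI conjI)
        show "\<forall>y\<in>X. \<exists>x z. (x, z) \<in> G \<and> z - complex_of_real mu *\<^sub>C x = y" using surj by blast
        show "\<exists>C. \<forall>(x, z)\<in>G. norm x \<le> C * norm (z - complex_of_real mu *\<^sub>C x)"
          using bound by blast
      qed
      then show False using spec unfolding spectrum_op_def by blast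
    qed
  qed
qed

end
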